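(* Let $T$ be a finite tree endowed with a partial domino tiling, $\mathbb{K}$ a field, and $\boldsymbol{\alpha}=(\alpha_t)_{t\in T}$ a family of invertible elements of $\mathbb{K}$. Then $X_T(\boldsymbol{\alpha})$ is isomorphic to $X_T(\boldsymbol{\beta})$ for some family $\boldsymbol{\beta}=(\beta_t)_{t\in T}$ of invertible elements of $\mathbb{K}$ such that $\beta_s=1$ for every vertex $s$ covered by a domino.
   Context: For a finite tree $T$ write $s-t$ when vertices $s,t$ are adjacent. For a family $\boldsymbol{\alpha}=(\alpha_t)_{t\in T}$ of elements of a field $\mathbb{K}$, $X_T(\boldsymbol{\alpha})$ denotes the affine scheme over $\mathbb{K}$ with coordinates $x_t,x'_t$ ($t\in T$) defined by $x_t x'_t = 1+\alpha_t\prod_{s-t} x_s$ for all vertices $t$. A partial domino tiling of $T$ is a subset of the edges such that every vertex is an end of at most one chosen edge (domino); a vertex is covered if it is an end of a chosen edge. *)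

theory Defs
  imports Main "HOL-Library.Poly_Mapping"
begin

definition tree_edges :: "('v \<Rightarrow> 'v \<Rightarrow> bool) \<Rightarrow> 'v set set" where
  "tree_edges adj = {{s, t} | s t. adj s t}"

definition is_tree :: "('v::finite \<Rightarrow> 'v \<Rightarrow> bool) \<Rightarrow> bool" where
  "is_tree adj \<longleftrightarrow>
     (\<forall>s t. adj s t \<longrightarrow> adj t s) \<and> (\<forall>s. \<not> adj s s) \<and>
     (\<forall>s t. adj\<^sup>*\<^sup>* s t) \<and> card (tree_edges adj) = card (UNIV :: 'v set) - 1"

definition partial_domino_tiling :: "('v \<Rightarrow> 'v \<Rightarrow> bool) \<Rightarrow> 'v set set \<Rightarrow> bool" where
  "partial_domino_tiling adj D \<longleftrightarrow>
     D \<subseteq> tree_edges adj \<and> (\<forall>e\<in>D. \<forall>e'\<in>D. e \<noteq> e' \<longrightarrow> e \<inter> e' = {})"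

definition covered :: "'v set set \<Rightarrow> 'v \<Rightarrow> bool" where
  "covered D s \<longleftrightarrow> s \<in> \<Union>D"

type_synonym ('x, 'k) mpoly = "('x \<Rightarrow>\<^sub>0 nat) \<Rightarrow>\<^sub>0 'k"

definition mp_const :: "'k::comm_ring_1 \<Rightarrow> ('x, 'k) mpoly" where
  "mp_const c = Poly_Mapping.single 0 c"

definition mp_var :: "'x \<Rightarrow> ('x, 'k::comm_ring_1) mpoly" where
  "mp_var v = Poly_Mapping.single (Poly_Mapping.single v 1) 1"

definition mp_subst :: "('x \<Rightarrow> ('y, 'k::comm_ring_1) mpoly) \<Rightarrow> ('x, 'k) mpoly \<Rightarrow> ('y, 'k) mpoly" where
  "mp_subst \<sigma> p =
     (\<Sum>mon\<in>Poly_Mapping.keys p. mp_const (Poly_Mapping.lookup p mon) * (\<Prod>v\<in>Poly_Mapping.keys (mon :: 'x \<Rightarrow>\<^sub>0 nat). \<sigma> v ^ Poly_Mapping.lookup mon v))"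

definition mp_ideal :: "('i \<Rightarrow> ('x, 'k::comm_ring_1) mpoly) \<Rightarrow> ('x, 'k) mpoly set" where
  "mp_ideal g = {(\<Sum>i\<in>I. c i * g i) | I c. finite I}"

text \<open>Coordinates: (t, False) stands for x_t and (t, True) for x'_t.
The defining relation at vertex t: x_t x'_t - 1 - alpha_t prod_{s-t} x_s.\<close>

definition XT_rel :: "('v::finite \<Rightarrow> 'v \<Rightarrow> bool) \<Rightarrow> ('v \<Rightarrow> 'k::field) \<Rightarrow> 'v
                       \<Rightarrow> ('v \<times> bool, 'k) mpoly" where
  "XT_rel adj \<alpha> t =
     mp_var (t, False) * mp_var (t, True) - 1
       - mp_const (\<alpha> t) * (\<Prod>s\<in>{s. adj s t}. mp_var (s, False))"

definition XT_ideal :: "('v::finite \<Rightarrow> 'v \<Rightarrow> bool) \<Rightarrow> ('v \<Rightarrow> 'k::field)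
                         \<Rightarrow> ('v \<times> bool, 'k) mpoly set" where
  "XT_ideal adj \<alpha> = mp_ideal (XT_rel adj \<alpha>)"

text \<open>Isomorphism of the affine K-schemes X_T(alpha) and X_T(beta), i.e. of their
coordinate K-algebras K[x,x']/I_alpha and K[x,x']/I_beta: a morphism X_alpha -> X_beta
is given by polynomials F (images of the coordinates) such that pulling back the
relations of X_beta lands in I_alpha; likewise G backwards; and both composites are the
identity modulo the respective ideals.\<close>

definition XT_iso :: "('v::finite \<Rightarrow> 'v \<Rightarrow> bool) \<Rightarrow> ('v \<Rightarrow> 'k::field) \<Rightarrow> ('v \<Rightarrow> 'k) \<Rightarrow> bool" where
  "XT_iso adj \<alpha> \<beta> \<longleftrightarrow>
     (\<exists>F G :: 'v \<times> bool \<Rightarrow> ('v \<times> bool, 'k) mpoly.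
        (\<forall>t. mp_subst F (XT_rel adj \<beta> t) \<in> XT_ideal adj \<alpha>) \<and>
        (\<forall>t. mp_subst G (XT_rel adj \<alpha> t) \<in> XT_ideal adj \<beta>) \<and>
        (\<forall>v. mp_subst F (G v) - mp_var v \<in> XT_ideal adj \<alpha>) \<and>
        (\<forall>v. mp_subst G (F v) - mp_var v \<in> XT_ideal adj \<beta>))"

end

theory Submission
  imports Defs
begin


lemma poly_expand: "p = (\<Sum>m\<in>Poly_Mapping.keys p. Poly_Mapping.single m (Poly_Mapping.lookup p m))"
proof (rule poly_mapping_eqI)
  fix k
  show "Poly_Mapping.lookup p k = Poly_Mapping.lookup (\<Sum>m\<in>Poly_Mapping.keys p. Poly_Mapping.single m (Poly_Mapping.lookup p m)) k"
    unfolding lookup_sum lookup_single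
    by (cases "k \<in> Poly_Mapping.keys p") (auto simp: when_def in_keys_iff)
qed

definition monev :: "('x \<Rightarrow> ('y, 'k::comm_ring_1) mpoly) \<Rightarrow> ('x \<Rightarrow>\<^sub>0 nat) \<Rightarrow> ('y, 'k) mpoly" where
  "monev \<sigma> m = (\<Prod>v\<in>Poly_Mapping.keys m. \<sigma> v ^ Poly_Mapping.lookup m v)"

lemma monev_super: "finite S \<Longrightarrow> Poly_Mapping.keys m \<subseteq> S \<Longrightarrow> monev \<sigma> m = (\<Prod>v\<in>S. \<sigma> v ^ Poly_Mapping.lookup m v)"
  unfolding monev_def by (rule prod.mono_neutral_left) (auto simp: in_keys_iff)

lemma monev_add: "monev \<sigma> (a + b) = monev \<sigma> a * monev \<sigma> b"
proof -
  let ?S = "Poly_Mapping.keys a \<union> Poly_Mapping.keys b"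
  have "monev \<sigma> (a+b) = (\<Prod>v\<in>?S. \<sigma> v ^ Poly_Mapping.lookup (a+b) v)"
    by (rule monev_super) (auto simp: keys_add)
  also have "\<dots> = (\<Prod>v\<in>?S. \<sigma> v ^ Poly_Mapping.lookup a v) * (\<Prod>v\<in>?S. \<sigma> v ^ Poly_Mapping.lookup b v)"
    by (simp add: lookup_add power_add prod.distrib)
  also have "\<dots> = monev \<sigma> a * monev \<sigma> b"
    by (simp add: monev_super[symmetric])
  finally show ?thesis .
qed

lemma monev_zero [simp]: "monev \<sigma> 0 = 1" by (simp add: monev_def)

lemma mp_subst_monev: "mp_subst \<sigma> p = (\<Sum>m\<in>Poly_Mapping.keys p. mp_const (Poly_Mapping.lookup p m) * monev \<sigma> m)"
  by (simp add: mp_subst_def monev_def)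

lemma mp_const_zero [simp]: "mp_const 0 = 0" by (simp add: mp_const_def)
lemma mp_const_one [simp]: "mp_const 1 = 1" by (simp add: mp_const_def)
lemma mp_const_add: "mp_const (a + b) = mp_const a + mp_const b" by (simp add: mp_const_def single_add)
lemma mp_const_mult: "mp_const (a * b) = mp_const a * mp_const b" by (simp add: mp_const_def mult_single)
lemma mp_const_prod: "mp_const (\<Prod>i\<in>I. f i) = (\<Prod>i\<in>I. mp_const (f i))"
  by (induction I rule: infinite_finite_induct) (auto simp: mp_const_mult)

lemma mp_subst_super: "finite S \<Longrightarrow> Poly_Mapping.keys p \<subseteq> S \<Longrightarrow>
   mp_subst \<sigma> p = (\<Sum>m\<in>S. mp_const (Poly_Mapping.lookup p m) * monev \<sigma> m)"
  unfolding mp_subst_monev by (rule sum.mono_neutral_left) (auto simp: in_keys_iff)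

lemma mp_subst_add: "mp_subst \<sigma> (p + q) = mp_subst \<sigma> p + mp_subst \<sigma> q"
proof -
  let ?S = "Poly_Mapping.keys p \<union> Poly_Mapping.keys q"
  have "mp_subst \<sigma> (p+q) = (\<Sum>m\<in>?S. mp_const (Poly_Mapping.lookup (p+q) m) * monev \<sigma> m)"
    by (rule mp_subst_super) (auto simp: keys_add)
  also have "\<dots> = (\<Sum>m\<in>?S. mp_const (Poly_Mapping.lookup p m) * monev \<sigma> m) + (\<Sum>m\<in>?S. mp_const (Poly_Mapping.lookup q m) * monev \<sigma> m)"
    by (simp add: lookup_add mp_const_add distrib_right sum.distrib)
  also have "\<dots> = mp_subst \<sigma> p + mp_subst \<sigma> q"
    by (simp add: mp_subst_super[symmetric])
  finally show ?thesis .
qed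

lemma mp_subst_zero [simp]: "mp_subst \<sigma> 0 = 0" by (simp add: mp_subst_def)

lemma mp_subst_diff: "mp_subst \<sigma> (p - q) = mp_subst \<sigma> p - mp_subst \<sigma> q"
proof -
  have "mp_subst \<sigma> (p - q) + mp_subst \<sigma> q = mp_subst \<sigma> p"
    by (metis mp_subst_add diff_add_cancel)
  then show ?thesis by (simp add: eq_diff_eq)
qed

lemma mp_subst_sum: "mp_subst \<sigma> (\<Sum>i\<in>I. f i) = (\<Sum>i\<in>I. mp_subst \<sigma> (f i))"
  by (induction I rule: infinite_finite_induct) (auto simp: mp_subst_add)

lemma mp_subst_single: "mp_subst \<sigma> (Poly_Mapping.single m c) = mp_const c * monev \<sigma> m"
  by (cases "c = 0") (simp_all add: mp_subst_monev)

lemma mp_subst_mult: "mp_subst \<sigma> (p * q) = mp_subst \<sigma> p * mp_subst \<sigma> q"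
proof -
  have "p * q = (\<Sum>a\<in>Poly_Mapping.keys p. \<Sum>b\<in>Poly_Mapping.keys q.
      Poly_Mapping.single a (Poly_Mapping.lookup p a) * Poly_Mapping.single b (Poly_Mapping.lookup q b))"
    by (subst (1) poly_expand, subst (1) poly_expand[of q]) (simp add: sum_product)
  hence "mp_subst \<sigma> (p * q) = (\<Sum>a\<in>Poly_Mapping.keys p. \<Sum>b\<in>Poly_Mapping.keys q.
      mp_const (Poly_Mapping.lookup p a) * monev \<sigma> a * (mp_const (Poly_Mapping.lookup q b) * monev \<sigma> b))"
    by (simp add: mp_subst_sum mult_single mp_subst_single monev_add mp_const_mult mult_ac)
  also have "\<dots> = mp_subst \<sigma> p * mp_subst \<sigma> q"
    by (simp add: mp_subst_monev sum_product)
  finally show ?thesis .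
qed

lemma mp_subst_one [simp]: "mp_subst \<sigma> 1 = 1"
  using mp_subst_single[of \<sigma> 0 1] by simp

lemma mp_subst_const [simp]: "mp_subst \<sigma> (mp_const c) = mp_const c"
  by (simp add: mp_const_def mp_subst_single)

lemma mp_subst_var [simp]: "mp_subst \<sigma> (mp_var v) = \<sigma> v"
  by (simp add: mp_var_def mp_subst_single monev_def)

lemma mp_subst_prod: "mp_subst \<sigma> (\<Prod>i\<in>I. f i) = (\<Prod>i\<in>I. mp_subst \<sigma> (f i))"
  by (induction I rule: infinite_finite_induct) (auto simp: mp_subst_mult)



definition scl :: "('v \<Rightarrow> 'k::field) \<Rightarrow> 'v \<times> bool \<Rightarrow> ('v \<times> bool, 'k) mpoly" where
  "scl \<nu> = (\<lambda>(t, b). if b then mp_const (inverse (\<nu> t)) * mp_var (t, True) else mp_const (\<nu> t) * mp_var (t, False))"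

lemma scl_rel:
  assumes nz: "\<forall>t. \<nu> t \<noteq> 0" and eq: "\<forall>t. \<beta> t * (\<Prod>s\<in>{s. adj s t}. \<nu> s) = \<alpha> t"
  shows "mp_subst (scl \<nu>) (XT_rel adj \<beta> t) = XT_rel adj \<alpha> t"
proof -
  have 1: "mp_const (\<nu> t) * mp_var (t, False) * (mp_const (inverse (\<nu> t)) * mp_var (t, True))
      = mp_var (t, False) * mp_var (t, True)"
  proof -
    have "mp_const (\<nu> t) * mp_const (inverse (\<nu> t)) = (1::('a \<times> bool, 'b) mpoly)"
      using nz by (simp add: mp_const_mult[symmetric])
    then show ?thesis by (metis (no_types, lifting) mult.assoc mult.commute mult.left_commute mult_1)
  qed
  have 2: "mp_const (\<beta> t) * (\<Prod>s\<in>{s. adj s t}. mp_const (\<nu> s) * mp_var (s, False))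
      = mp_const (\<alpha> t) * (\<Prod>s\<in>{s. adj s t}. mp_var (s, False))"
    using eq[rule_format, of t]
    by (simp add: prod.distrib mp_const_prod[symmetric] mult.assoc[symmetric] mp_const_mult[symmetric])
  show ?thesis
    unfolding XT_rel_def
    by (simp add: mp_subst_diff mp_subst_mult mp_subst_prod scl_def 1 2)
qed

lemma scl_comp:
  assumes nz: "\<forall>t. \<nu> t \<noteq> 0"
  shows "mp_subst (scl \<nu>) (scl (\<lambda>t. inverse (\<nu> t)) v) = mp_var v"
proof (cases v)
  case (Pair t b)
  have a: "mp_const (inverse (\<nu> t)) * (mp_const (\<nu> t) * x) = x" for x :: "('a \<times> bool, 'b) mpoly"
    using nz by (simp add: mult.assoc[symmetric] mp_const_mult[symmetric])
  have b: "mp_const (\<nu> t) * (mp_const (inverse (\<nu> t)) * x) = x" for x :: "('a \<times> bool, 'b) mpoly"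
    using nz by (simp add: mult.assoc[symmetric] mp_const_mult[symmetric])
  show ?thesis using Pair by (cases b) (simp_all add: scl_def mp_subst_mult a b)
qed

lemma rel_in_ideal: "XT_rel adj \<alpha> t \<in> XT_ideal adj \<alpha>"
  unfolding XT_ideal_def mp_ideal_def
  by (rule CollectI, rule exI[of _ "{t}"], rule exI[of _ "\<lambda>_. 1"]) simp

lemma zero_in_ideal: "0 \<in> XT_ideal adj \<alpha>"
  unfolding XT_ideal_def mp_ideal_def
  by (rule CollectI, rule exI[of _ "{}"]) simp

lemma XT_iso_scale:
  fixes adj :: "'v::finite \<Rightarrow> 'v \<Rightarrow> bool" and \<alpha> :: "'v \<Rightarrow> 'k::field"
  assumes nz: "\<forall>t. \<mu> t \<noteq> 0"
    and \<beta>: "\<forall>t. \<beta> t = \<alpha> t * (\<Prod>s\<in>{s. adj s t}. \<mu> s)"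
  shows "XT_iso adj \<alpha> \<beta>"
proof -
  define \<nu> where "\<nu> = (\<lambda>t. inverse (\<mu> t))"
  have nz': "\<forall>t. \<nu> t \<noteq> 0" using nz by (simp add: \<nu>_def)
  have e1: "\<forall>t. \<beta> t * (\<Prod>s\<in>{s. adj s t}. \<nu> s) = \<alpha> t"
  proof
    fix t
    have "(\<Prod>s\<in>{s. adj s t}. \<mu> s) \<noteq> 0" using nz by (simp add: prod_zero_iff)
    moreover have "(\<Prod>s\<in>{s. adj s t}. \<nu> s) = inverse (\<Prod>s\<in>{s. adj s t}. \<mu> s)"
      unfolding \<nu>_def using prod_inversef[of \<mu>] by (simp add: comp_def)
    ultimately show "\<beta> t * (\<Prod>s\<in>{s. adj s t}. \<nu> s) = \<alpha> t"
      by (simp add: \<beta>)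
  qed
  have e2: "\<forall>t. \<alpha> t * (\<Prod>s\<in>{s. adj s t}. \<mu> s) = \<beta> t" using \<beta> by simp
  have inv: "(\<lambda>t. inverse (\<nu> t)) = \<mu>" by (simp add: \<nu>_def)
  show ?thesis
    unfolding XT_iso_def
    apply (rule exI[of _ "scl \<nu>"], rule exI[of _ "scl \<mu>"])
    using scl_rel[OF nz' e1] scl_rel[OF nz e2] scl_comp[OF nz'] scl_comp[OF nz] inv
    by (simp add: rel_in_ideal zero_in_ideal \<nu>_def)
qed



definition ES :: "('v \<Rightarrow> 'v \<Rightarrow> bool) \<Rightarrow> 'v set \<Rightarrow> 'v set set" where
  "ES adj S = {{u, w} | u w. adj u w \<and> u \<in> S \<and> w \<in> S}"

lemma tree_bound:
  fixes adj :: "'v::finite \<Rightarrow> 'v \<Rightarrow> bool"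
  assumes tr: "is_tree adj" and ne: "S \<noteq> {}"
  shows "card (ES adj S) \<le> card S - 1"
proof -
  have sym: "\<And>s t. adj s t \<Longrightarrow> adj t s" and irr: "\<And>s. \<not> adj s s"
    and conn: "\<And>s t. adj\<^sup>*\<^sup>* s t" and ce: "card (tree_edges adj) = card (UNIV :: 'v set) - 1"
    using tr unfolding is_tree_def by auto
  obtain s0 where s0: "s0 \<in> S" using ne by auto
  define dist where "dist v = (LEAST k. \<exists>s\<in>S. (adj ^^ k) v s)" for v
  have ex: "\<exists>k. \<exists>s\<in>S. (adj ^^ k) v s" for v
    using conn[of v s0] s0 by (auto simp: rtranclp_power)
  have step: "\<exists>u. adj v u \<and> dist u < dist v" if "v \<notin> S" for v
  proof -
    obtain s where s: "s \<in> S" "(adj ^^ dist v) v s"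
      using LeastI_ex[OF ex[of v]] unfolding dist_def by blast
    have "dist v \<noteq> 0" using s that by (metis relpowp.simps(1))
    then obtain j where j: "dist v = Suc j" by (cases "dist v") auto
    obtain u where u: "adj v u" "(adj ^^ j) u s" using relpowp_Suc_D2 s(2) j by metis
    have "dist u \<le> j" unfolding dist_def using u(2) s(1) by (blast intro: Least_le)
    with u j show ?thesis by auto
  qed
  define nxt where "nxt v = (SOME u. adj v u \<and> dist u < dist v)" for v
  have nxt: "adj v (nxt v) \<and> dist (nxt v) < dist v" if "v \<notin> S" for v
    unfolding nxt_def using someI_ex[OF step[OF that]] .
  define g where "g v = {v, nxt v}" for v
  have inj: "inj_on g (UNIV - S)"
  proof (rule inj_onI)
    fix v w assume v: "v \<in> UNIV - S" and w: "w \<in> UNIV - S" and e: "g v = g w"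
    show "v = w"
    proof (rule ccontr)
      assume "v \<noteq> w"
      have "v \<in> g w" using e unfolding g_def by auto
      then have 1: "v = nxt w" using \<open>v \<noteq> w\<close> unfolding g_def by auto
      have "w \<in> g v" using e unfolding g_def by auto
      then have 2: "w = nxt v" using \<open>v \<noteq> w\<close> unfolding g_def by auto
      have a: "dist (nxt w) < dist w" using nxt w by blast
      have b: "dist (nxt v) < dist v" using nxt v by blast
      show False using a b unfolding 1[symmetric] 2[symmetric] by simp
    qed
  qed
  have sub: "g ` (UNIV - S) \<subseteq> tree_edges adj - ES adj S"
  proof
    fix e assume "e \<in> g ` (UNIV - S)"
    then obtain v where v: "v \<notin> S" "e = {v, nxt v}" unfolding g_def by auto
    have "e \<in> tree_edges adj" using nxt[OF v(1)] v unfolding tree_edges_def by auto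
    moreover have "e \<notin> ES adj S" using v unfolding ES_def by (auto simp: doubleton_eq_iff)
    ultimately show "e \<in> tree_edges adj - ES adj S" by auto
  qed
  have ESsub: "ES adj S \<subseteq> tree_edges adj" unfolding ES_def tree_edges_def by auto
  have "card (UNIV - S) \<le> card (tree_edges adj - ES adj S)"
    using card_inj_on_le[OF inj sub] by simp
  also have "\<dots> = card (tree_edges adj) - card (ES adj S)"
    using ESsub by (simp add: card_Diff_subset finite_subset)
  finally have "card (UNIV :: 'v set) - card S \<le> card (UNIV :: 'v set) - 1 - card (ES adj S)"
    by (simp add: card_Diff_subset ce)
  moreover have "card S \<le> card (UNIV :: 'v set)" by (simp add: card_mono)
  moreover have "card S \<ge> 1" using ne by (simp add: Suc_leI card_gt_0_iff)
  moreover have "card (ES adj S) \<le> card (tree_edges adj)" using ESsub by (simp add: card_mono)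
  ultimately show ?thesis using ce by linarith
qed

lemma handshake:
  fixes adj :: "'v::finite \<Rightarrow> 'v \<Rightarrow> bool"
  assumes sym: "\<And>s t. adj s t \<Longrightarrow> adj t s" and irr: "\<And>s. \<not> adj s s"
    and deg: "\<forall>v\<in>C. 2 \<le> card {u\<in>C. adj v u}"
  shows "card C \<le> card (ES adj C)"
proof -
  define P where "P = (SIGMA v:C. {u\<in>C. adj v u})"
  have "2 * card C = (\<Sum>v\<in>C. 2)" by simp
  also have "\<dots> \<le> (\<Sum>v\<in>C. card {u\<in>C. adj v u})" using deg by (intro sum_mono) auto
  also have "\<dots> = card P" unfolding P_def by simp
  finally have 1: "2 * card C \<le> card P" .
  define A where "A e = {p\<in>P. {fst p, snd p} = e}" for e
  have PU: "P = \<Union>(A ` ES adj C)"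
    unfolding A_def P_def ES_def by (auto; blast)
  have cardA: "card (A e) = 2" if eES: "e \<in> ES adj C" for e
  proof -
    obtain a b where ab: "e = {a,b}" "adj a b" "a \<in> C" "b \<in> C" using eES unfolding ES_def by blast
    have "a \<noteq> b" using ab irr by auto
    have "A e = {(a,b),(b,a)}"
      unfolding A_def P_def using ab sym by (auto simp: doubleton_eq_iff)
    then show ?thesis using \<open>a \<noteq> b\<close> by simp
  qed
  have "card P = (\<Sum>e\<in>ES adj C. card (A e))"
    unfolding PU by (rule card_UN_disjoint) (auto simp: A_def)
  also have "\<dots> = 2 * card (ES adj C)" using cardA by simp
  finally show ?thesis using 1 by simp
qed

lemma leaf:
  fixes adj :: "'v::finite \<Rightarrow> 'v \<Rightarrow> bool"
  assumes tr: "is_tree adj" and D: "partial_domino_tiling adj D" and ne: "D \<noteq> {}"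
  shows "\<exists>l p. {l, p} \<in> D \<and> adj l p \<and> (\<forall>s. adj l s \<and> s \<in> \<Union>D \<longrightarrow> s = p)"
proof (rule ccontr)
  assume H: "\<not> ?thesis"
  have sym: "\<And>s t. adj s t \<Longrightarrow> adj t s" and irr: "\<And>s. \<not> adj s s"
    using tr unfolding is_tree_def by auto
  define C where "C = \<Union>D"
  have Dsub: "D \<subseteq> tree_edges adj" using D unfolding partial_domino_tiling_def by auto
  have deg: "\<forall>v\<in>C. 2 \<le> card {u\<in>C. adj v u}"
  proof
    fix v assume "v \<in> C"
    then obtain e where e: "e \<in> D" "v \<in> e" unfolding C_def by auto
    then obtain a b where ab: "e = {a,b}" "adj a b" using Dsub unfolding tree_edges_def by auto
    obtain p where p: "e = {v,p}" "adj v p" using ab e sym by auto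
    from H p e obtain s where s: "adj v s" "s \<in> C" "s \<noteq> p" unfolding C_def by blast
    have "p \<in> C" using p e unfolding C_def by auto
    have "{p, s} \<subseteq> {u\<in>C. adj v u}" using s p \<open>p \<in> C\<close> by auto
    then have "card {p, s} \<le> card {u\<in>C. adj v u}" by (intro card_mono) auto
    then show "2 \<le> card {u\<in>C. adj v u}" using s by simp
  qed
  have "C \<noteq> {}"
  proof -
    obtain e where "e \<in> D" using ne by auto
    then obtain a b where "e = {a,b}" using Dsub unfolding tree_edges_def by auto
    then show ?thesis using \<open>e \<in> D\<close> unfolding C_def by blast
  qed
  then have "card (ES adj C) \<le> card C - 1" using tree_bound[OF tr] by blast
  moreover have "card C \<le> card (ES adj C)" using handshake[OF sym irr deg] by blast
  moreover have "card C \<ge> 1" using \<open>C \<noteq> {}\<close> by (simp add: Suc_leI card_gt_0_iff)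
  ultimately show False by linarith
qed



lemma prod_upd:
  assumes "finite A"
  shows "(\<Prod>s\<in>A. (f(p := a)) s) = (if p \<in> A then a * (\<Prod>s\<in>A - {p}. f s) else (\<Prod>s\<in>A. f s))"
proof (cases "p \<in> A")
  case True
  then have "(\<Prod>s\<in>A. (f(p := a)) s) = (f(p := a)) p * (\<Prod>s\<in>A - {p}. (f(p := a)) s)"
    using assms by (simp add: prod.remove)
  also have "(\<Prod>s\<in>A - {p}. (f(p := a)) s) = (\<Prod>s\<in>A - {p}. f s)"
    by (rule prod.cong) auto
  finally show ?thesis using True by simp
next
  case False
  then show ?thesis by (auto intro: prod.cong)
qed

lemma solve:
  fixes adj :: "'v::finite \<Rightarrow> 'v \<Rightarrow> bool" and c :: "'v \<Rightarrow> 'k::field"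
  assumes tr: "is_tree adj"
  shows "partial_domino_tiling adj D \<Longrightarrow> (\<forall>t. c t \<noteq> 0) \<Longrightarrow>
    \<exists>\<mu>. (\<forall>s. \<mu> s \<noteq> 0) \<and> (\<forall>s. s \<notin> \<Union>D \<longrightarrow> \<mu> s = 1) \<and> (\<forall>t\<in>\<Union>D. (\<Prod>s\<in>{s. adj s t}. \<mu> s) = c t)"
proof (induction "card D" arbitrary: D c rule: less_induct)
  case less
  note D = less.prems(1) and cnz = less.prems(2)
  have sym: "\<And>s t. adj s t \<Longrightarrow> adj t s" and irr: "\<And>s. \<not> adj s s"
    using tr unfolding is_tree_def by auto
  show ?case
  proof (cases "D = {}")
    case True
    then show ?thesis by (intro exI[of _ "\<lambda>_. 1"]) auto
  next
    case False
    obtain l p where lp: "{l, p} \<in> D" "adj l p" and leafp: "\<forall>s. adj l s \<and> s \<in> \<Union>D \<longrightarrow> s = p"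
      using leaf[OF tr D False] by blast
    have lnp: "l \<noteq> p" using lp irr by auto
    define D0 where "D0 = D - {{l, p}}"
    have finD: "finite D" by (rule finite_subset[of _ UNIV]) auto
    have cardlt: "card D0 < card D" unfolding D0_def by (rule card_Diff1_less[OF finD lp(1)])
    have D0: "partial_domino_tiling adj D0" using D unfolding D0_def partial_domino_tiling_def by auto
    have disj: "\<forall>e\<in>D. \<forall>e'\<in>D. e \<noteq> e' \<longrightarrow> e \<inter> e' = {}" using D unfolding partial_domino_tiling_def by auto
    have lnot: "l \<notin> \<Union>D0" and pnot: "p \<notin> \<Union>D0"
    proof -
      show "l \<notin> \<Union>D0"
      proof
        assume "l \<in> \<Union>D0"
        then obtain e where e: "e \<in> D" "e \<noteq> {l,p}" "l \<in> e" unfolding D0_def by auto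
        from disj[rule_format, OF e(1) lp(1) e(2)] e(3) show False by auto
      qed
      show "p \<notin> \<Union>D0"
      proof
        assume "p \<in> \<Union>D0"
        then obtain e where e: "e \<in> D" "e \<noteq> {l,p}" "p \<in> e" unfolding D0_def by auto
        from disj[rule_format, OF e(1) lp(1) e(2)] e(3) show False by auto
      qed
    qed
    have UD: "\<Union>D = \<Union>D0 \<union> {l, p}" unfolding D0_def using lp by auto
    define c' where "c' t = (if adj p t then c t / c l else c t)" for t
    have c'nz: "\<forall>t. c' t \<noteq> 0" using cnz by (simp add: c'_def)
    obtain \<mu>' where m1: "\<forall>s. \<mu>' s \<noteq> 0" and m2: "\<forall>s. s \<notin> \<Union>D0 \<longrightarrow> \<mu>' s = 1"
        and m3: "\<forall>t\<in>\<Union>D0. (\<Prod>s\<in>{s. adj s t}. \<mu>' s) = c' t"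
      using less.hyps[OF cardlt D0 c'nz] by blast
    have mp: "\<mu>' p = 1" and ml: "\<mu>' l = 1" using m2 lnot pnot by auto
    define x where "x = c p / (\<Prod>s\<in>{s. adj s p} - {l}. \<mu>' s)"
    define \<mu> where "\<mu> = (\<mu>'(p := c l))(l := x)"
    have prodnz: "(\<Prod>s\<in>{s. adj s p} - {l}. \<mu>' s) \<noteq> 0" using m1 by (simp add: prod_zero_iff)
    have xnz: "x \<noteq> 0" using cnz prodnz by (simp add: x_def)
    show ?thesis
    proof (intro exI[of _ \<mu>] conjI allI impI ballI)
      fix s show "\<mu> s \<noteq> 0" using m1 cnz xnz by (simp add: \<mu>_def)
    next
      fix s assume "s \<notin> \<Union>D"
      then show "\<mu> s = 1" using m2 lp UD by (auto simp: \<mu>_def)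
    next
      fix t assume tD: "t \<in> \<Union>D"
      show "(\<Prod>s\<in>{s. adj s t}. \<mu> s) = c t"
      proof (cases "t \<in> \<Union>D0")
        case True
        have tl: "t \<noteq> l" "t \<noteq> p" using True lnot pnot by auto
        have "\<not> adj l t" using leafp tD tl by auto
        then have "(\<Prod>s\<in>{s. adj s t}. \<mu> s) = (\<Prod>s\<in>{s. adj s t}. (\<mu>'(p := c l)) s)"
          unfolding \<mu>_def by (intro prod.cong) auto
        also have "\<dots> = (if adj p t then c l * (\<Prod>s\<in>{s. adj s t} - {p}. \<mu>' s) else (\<Prod>s\<in>{s. adj s t}. \<mu>' s))"
          by (subst prod_upd) simp_all
        also have "(\<Prod>s\<in>{s. adj s t} - {p}. \<mu>' s) = (\<Prod>s\<in>{s. adj s t}. \<mu>' s)"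
          using mp by (cases "adj p t") (simp_all add: prod.remove)
        moreover have "(\<Prod>s\<in>{s. adj s t}. \<mu>' s) = c' t" using m3 True by blast
        ultimately show ?thesis using cnz[rule_format, of l] by (simp add: c'_def)
      next
        case False
        then have "t = l \<or> t = p" using tD UD by auto
        then show ?thesis
        proof
          assume tl: "t = l"
          have "p \<in> {s. adj s l}" using sym[OF lp(2)] by simp
          then have "(\<Prod>s\<in>{s. adj s l}. \<mu> s) = \<mu> p * (\<Prod>s\<in>{s. adj s l} - {p}. \<mu> s)"
            by (simp add: prod.remove)
          also have "(\<Prod>s\<in>{s. adj s l} - {p}. \<mu> s) = (\<Prod>s\<in>{s. adj s l} - {p}. 1)"
          proof (rule prod.cong)
            fix s assume s: "s \<in> {s. adj s l} - {p}"
            then have "s \<notin> \<Union>D" using leafp sym[of s l] by blast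
            moreover have "s \<noteq> l" using s irr by auto
            ultimately show "\<mu> s = 1" using m2 UD s by (auto simp: \<mu>_def)
          qed simp
          finally show ?thesis using tl lnp by (simp add: \<mu>_def)
        next
          assume tp: "t = p"
          have "l \<in> {s. adj s p}" using lp by auto
          then have "(\<Prod>s\<in>{s. adj s p}. \<mu> s) = \<mu> l * (\<Prod>s\<in>{s. adj s p} - {l}. \<mu> s)"
            by (simp add: prod.remove)
          also have "(\<Prod>s\<in>{s. adj s p} - {l}. \<mu> s) = (\<Prod>s\<in>{s. adj s p} - {l}. \<mu>' s)"
            by (rule prod.cong) (auto simp: \<mu>_def irr)
          finally show ?thesis using tp prodnz by (simp add: \<mu>_def x_def)
        qed
      qed
    qed
  qed
qed


theorem mainTheorem3:
  fixes adj :: "'v::finite \<Rightarrow> 'v \<Rightarrow> bool"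
    and D :: "'v set set"
    and \<alpha> :: "'v \<Rightarrow> 'k::field"
  assumes "is_tree adj"
    and "partial_domino_tiling adj D"
    and "\<forall>t. \<alpha> t \<noteq> 0"
  shows "\<exists>\<beta> :: 'v \<Rightarrow> 'k. (\<forall>t. \<beta> t \<noteq> 0) \<and> (\<forall>s. covered D s \<longrightarrow> \<beta> s = 1)
           \<and> XT_iso adj \<alpha> \<beta>"
proof -
  have cnz: "\<forall>t. inverse (\<alpha> t) \<noteq> 0" using assms(3) by simp
  obtain \<mu> :: "'v \<Rightarrow> 'k" where m1: "\<forall>s. \<mu> s \<noteq> 0"
      and m3: "\<forall>t\<in>\<Union>D. (\<Prod>s\<in>{s. adj s t}. \<mu> s) = inverse (\<alpha> t)"
    using solve[OF assms(1) assms(2) cnz] by blast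
  define \<beta> where "\<beta> t = \<alpha> t * (\<Prod>s\<in>{s. adj s t}. \<mu> s)" for t
  have "\<forall>t. \<beta> t \<noteq> 0" using assms(3) m1 by (simp add: \<beta>_def prod_zero_iff)
  moreover have "\<forall>s. covered D s \<longrightarrow> \<beta> s = 1"
  proof (intro allI impI)
    fix s assume "covered D s"
    then have "s \<in> \<Union>D" by (simp add: covered_def)
    then have "(\<Prod>u\<in>{u. adj u s}. \<mu> u) = inverse (\<alpha> s)" using m3 by blast
    then show "\<beta> s = 1" using assms(3) by (simp add: \<beta>_def)
  qed
  moreover have "XT_iso adj \<alpha> \<beta>"
    by (rule XT_iso_scale[OF m1]) (simp add: \<beta>_def)
  ultimately show ?thesis by blast
qed

end
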